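(* Under the mixed membership model $\mathbb{E}\mathbf{X}=\mathbf{H}=\theta\mathbf{\Pi}\mathbf{P}\mathbf{\Pi}^T$, assume there exist constants $0<c_0,c_1<1$ such that $\lambda_K(\mathbf{\Pi}^T\mathbf{\Pi})\ge c_0 n$, $\lambda_K(\mathbf{P})\ge c_0$, and $\theta\ge n^{-c_1}$. Then $$\alpha_n^2\le n\theta,\qquad d_k\sim n\theta,\quad k=1,\cdots,K.$$ Under the degree-corrected mixed membership model $\mathbf{H}=\mathbf{\Theta}\mathbf{\Pi}\mathbf{P}\mathbf{\Pi}^T\mathbf{\Theta}$, assume there exist constants $c_2,c_3\in(0,1)$ and $c_4>0$ such that $\min_{1\le k\le K}|\mathcal{N}_k|\ge c_2 n$, $\theta_{\max}\le c_4\theta_{\min}$, and $\theta_{\min}^2\ge n^{-c_3}$. Then similarly $$\alpha_n^2\le n\theta_{\max}^2,\qquad d_k\sim n\theta_{\max}^2,\quad k=1,\cdots,K.$$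
   Context: An undirected network on $n$ nodes has symmetric adjacency matrix $\mathbf{X}=\mathbf{H}+\mathbf{W}$, where the upper-triangular (including diagonal) entries of $\mathbf{X}$ are independent Bernoulli variables, $\mathbf{H}$ is the deterministic mean (probability) matrix of rank $K$ (fixed), and $\mathbf{W}=(w_{ij})$ is a symmetric noise matrix with independent entries on and above the diagonal. Let $\alpha_n=\{\max_{1\le j\le n}\sum_{i=1}^n\mathrm{var}(w_{ij})\}^{1/2}$. Write the eigendecomposition $\mathbf{H}=\mathbf{V}\mathbf{D}\mathbf{V}^T$ with $\mathbf{D}=\mathrm{diag}(d_1,\cdots,d_K)$, $|d_1|\ge\cdots\ge|d_K|>0$. Here $\mathbf{\Pi}=(\boldsymbol{\pi}_1,\cdots,\boldsymbol{\pi}_n)^T\in\mathbb{R}^{n\times K}$ has rows $\boldsymbol{\pi}_i$ that are community membership probability vectors (nonnegative entries summing to one), $\mathbf{P}=(p_{kl})\in\mathbb{R}^{K\times K}$ is nonsingular with entries in $[0,1]$, $\theta>0$ (possibly depending on $n$), $\mathbf{\Theta}=\mathrm{diag}(\theta_1,\cdots,\theta_n)$ with $\theta_i>0$ the degree heterogeneity parameters, $\theta_{\max}=\max_i\theta_i$, $\theta_{\min}=\min_i\theta_i$, and $\mathcal{N}_k=\{i:\boldsymbol{\pi}_i(k)=1\}$ is the set of pure nodes of community $k$. $\lambda_K(\cdot)$ denotes the $K$th largest eigenvalue; $a\sim b$ means same asymptotic order. *)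

theory Defs
  imports "Jordan_Normal_Form.Matrix" "Jordan_Normal_Form.Char_Poly"
begin

text \<open>lambda_K(A) for a K x K real symmetric matrix A: the K-th largest of its K
  (real) eigenvalues counted with multiplicity, i.e. the smallest eigenvalue.\<close>
definition lambda_K :: "real mat \<Rightarrow> real" where
  "lambda_K A = Min {x. eigenvalue A x}"

text \<open>alpha_n^2 = max_j sum_i var(w_ij) for the Bernoulli network with mean matrix H:
  var(w_ij) = h_ij (1 - h_ij).\<close>
definition alpha_sq :: "real mat \<Rightarrow> real" where
  "alpha_sq H = Max ((\<lambda>j. \<Sum>i<dim_row H. H $$ (i,j) * (1 - H $$ (i,j))) ` {..<dim_col H})"

definition membership_mat :: "nat \<Rightarrow> nat \<Rightarrow> real mat \<Rightarrow> bool" where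
  "membership_mat n K Pm \<longleftrightarrow> Pm \<in> carrier_mat n K \<and>
     (\<forall>i<n. (\<forall>k<K. Pm $$ (i,k) \<ge> 0) \<and> (\<Sum>k<K. Pm $$ (i,k)) = 1)"

definition conn_mat :: "nat \<Rightarrow> real mat \<Rightarrow> bool" where
  "conn_mat K P \<longleftrightarrow> P \<in> carrier_mat K K \<and> P\<^sup>T = P \<and>
     (\<forall>k<K. \<forall>l<K. 0 \<le> P $$ (k,l) \<and> P $$ (k,l) \<le> 1) \<and> det P \<noteq> 0"

definition prob_mat :: "nat \<Rightarrow> real mat \<Rightarrow> bool" where
  "prob_mat n H \<longleftrightarrow> H \<in> carrier_mat n n \<and> (\<forall>i<n. \<forall>j<n. 0 \<le> H $$ (i,j) \<and> H $$ (i,j) \<le> 1)"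

definition eigdecomp :: "nat \<Rightarrow> nat \<Rightarrow> real mat \<Rightarrow> real mat \<Rightarrow> (nat \<Rightarrow> real) \<Rightarrow> bool" where
  "eigdecomp n K H V d \<longleftrightarrow> V \<in> carrier_mat n K \<and> V\<^sup>T * V = 1\<^sub>m K \<and>
     H = V * mat K K (\<lambda>(k,l). if k = l then d k else 0) * V\<^sup>T \<and> (\<forall>k<K. d k \<noteq> 0)"

definition diag_of :: "nat \<Rightarrow> (nat \<Rightarrow> real) \<Rightarrow> real mat" where
  "diag_of n th = mat n n (\<lambda>(i,j). if i = j then th i else 0)"

definition pure_nodes :: "nat \<Rightarrow> real mat \<Rightarrow> nat \<Rightarrow> nat set" where
  "pure_nodes n Pm k = {i. i < n \<and> Pm $$ (i,k) = 1}"

definition H_dcmm :: "nat \<Rightarrow> (nat \<Rightarrow> real) \<Rightarrow> real mat \<Rightarrow> real mat \<Rightarrow> real mat" where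
  "H_dcmm n th Pm P = diag_of n th * Pm * P * Pm\<^sup>T * diag_of n th"

definition theta_max :: "nat \<Rightarrow> (nat \<Rightarrow> real) \<Rightarrow> real" where
  "theta_max n th = Max (th ` {..<n})"

definition theta_min :: "nat \<Rightarrow> (nat \<Rightarrow> real) \<Rightarrow> real" where
  "theta_min n th = Min (th ` {..<n})"

end

theory Submission
  imports Defs
begin

lemma sp_sum: "x \<in> carrier_vec n \<Longrightarrow> y \<in> carrier_vec n \<Longrightarrow> x \<bullet> y = (\<Sum>i<n. x$i * y$i)"
  unfolding scalar_prod_def by (auto intro: sum.cong)

lemma bil_sum:
  fixes B :: "real mat"
  assumes "B \<in> carrier_mat n n" "x \<in> carrier_vec n" "y \<in> carrier_vec n"
  shows "x \<bullet> (B *\<^sub>v y) = (\<Sum>i<n. \<Sum>j<n. B$$(i,j) * x$i * y$j)"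
proof -
  have "x \<bullet> (B *\<^sub>v y) = (\<Sum>i<n. x$i * (B *\<^sub>v y)$i)" using assms by (simp add: sp_sum)
  also have "\<dots> = (\<Sum>i<n. x$i * (\<Sum>j<n. B$$(i,j) * y$j))"
    using assms by (intro sum.cong refl) (simp add: mult_mat_vec_def row_def sp_sum)
  also have "\<dots> = (\<Sum>i<n. \<Sum>j<n. B$$(i,j) * x$i * y$j)"
    unfolding sum_distrib_left by (intro sum.cong refl) (simp add: algebra_simps)
  finally show ?thesis .
qed

lemma self_sp_nonneg: "(y::real vec) \<bullet> y \<ge> 0"
  unfolding scalar_prod_def by (intro sum_nonneg) auto

lemma amgm2: "\<bar>a*b\<bar> \<le> ((a::real)^2+b^2)/2"
proof -
  have "0 \<le> (\<bar>a\<bar>-\<bar>b\<bar>)^2" by simp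
  thus ?thesis by (simp add: power2_diff abs_mult)
qed

lemma qf_bound:
  fixes M :: "real mat"
  assumes M: "M \<in> carrier_mat n n" and v: "v \<in> carrier_vec n"
    and b: "\<And>i j. i<n \<Longrightarrow> j<n \<Longrightarrow> \<bar>M$$(i,j)\<bar> \<le> b"
  shows "\<bar>v \<bullet> (M *\<^sub>v v)\<bar> \<le> b * n * (v \<bullet> v)"
proof -
  have "\<bar>v \<bullet> (M *\<^sub>v v)\<bar> = \<bar>\<Sum>i<n. \<Sum>j<n. M$$(i,j) * v$i * v$j\<bar>" using bil_sum[OF M v v] by simp
  also have "\<dots> \<le> (\<Sum>i<n. \<Sum>j<n. \<bar>M$$(i,j) * v$i * v$j\<bar>)"
    by (rule order_trans[OF sum_abs], intro sum_mono sum_abs)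
  also have "\<dots> \<le> (\<Sum>i<n. \<Sum>j<n. b * ((v$i)^2 + (v$j)^2) / 2)"
  proof (intro sum_mono)
    fix i j assume "i \<in> {..<n}" "j \<in> {..<n}"
    hence "\<bar>M$$(i,j)\<bar> \<le> b" using b by auto
    moreover have "\<bar>v$i * v$j\<bar> \<le> ((v$i)^2 + (v$j)^2) / 2" by (rule amgm2)
    ultimately have "\<bar>M$$(i,j)\<bar> * \<bar>v$i * v$j\<bar> \<le> b * (((v$i)^2 + (v$j)^2) / 2)"
      by (intro mult_mono) auto
    thus "\<bar>M$$(i,j) * v$i * v$j\<bar> \<le> b * ((v$i)^2 + (v$j)^2) / 2"
      by (simp add: abs_mult mult.assoc)
  qed
  also have "\<dots> = b * n * (\<Sum>i<n. (v$i)^2)"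
    by (simp add: sum.distrib sum_divide_distrib[symmetric] sum_distrib_left[symmetric] add_divide_distrib algebra_simps)
  also have "(\<Sum>i<n. (v$i)^2) = v \<bullet> v" using v by (simp add: sp_sum power2_eq_square)
  finally show ?thesis .
qed


lemma quad_disc:
  fixes a b c :: real
  assumes h: "\<And>t. 0 \<le> a + 2*b*t + c*t^2" and c: "0 \<le> c"
  shows "b^2 \<le> a*c"
proof (cases "c = 0")
  case True
  have "b = 0"
  proof (rule ccontr)
    assume b: "b \<noteq> 0"
    have "0 \<le> a + 2*b*(-(a+1)/(2*b)) + c*(-(a+1)/(2*b))^2" by (rule h)
    also have "\<dots> = -1" using b True by (simp add: field_simps)
    finally show False by simp
  qed
  thus ?thesis using True by simp
next
  case False
  hence cp: "c > 0" using c by simp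
  have "0 \<le> a + 2*b*(-b/c) + c*(-b/c)^2" by (rule h)
  also have "\<dots> = a - b^2/c" using cp by (simp add: field_simps power2_eq_square)
  finally have "b^2/c \<le> a" by simp
  thus ?thesis using cp by (simp add: field_simps mult.commute)
qed

lemma bil_sym:
  fixes B :: "real mat"
  assumes B: "B \<in> carrier_mat n n" and sym: "\<And>i j. i<n \<Longrightarrow> j<n \<Longrightarrow> B$$(i,j) = B$$(j,i)"
    and x: "x \<in> carrier_vec n" and y: "y \<in> carrier_vec n"
  shows "x \<bullet> (B *\<^sub>v y) = y \<bullet> (B *\<^sub>v x)"
proof -
  have "x \<bullet> (B *\<^sub>v y) = (\<Sum>i<n. \<Sum>j<n. B$$(i,j) * x$i * y$j)" by (rule bil_sum[OF B x y])
  also have "\<dots> = (\<Sum>j<n. \<Sum>i<n. B$$(i,j) * x$i * y$j)" by (rule sum.swap)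
  also have "\<dots> = (\<Sum>j<n. \<Sum>i<n. B$$(j,i) * y$j * x$i)"
    using sym by (intro sum.cong refl) (simp add: mult_ac)
  also have "\<dots> = y \<bullet> (B *\<^sub>v x)" by (rule bil_sum[OF B y x, symmetric])
  finally show ?thesis .
qed

lemma bil_expand:
  fixes B :: "real mat"
  assumes B: "B \<in> carrier_mat n n" and sym: "\<And>i j. i<n \<Longrightarrow> j<n \<Longrightarrow> B$$(i,j) = B$$(j,i)"
    and x: "x \<in> carrier_vec n" and y: "y \<in> carrier_vec n"
  shows "(x + t \<cdot>\<^sub>v y) \<bullet> (B *\<^sub>v (x + t \<cdot>\<^sub>v y)) =
     x \<bullet> (B *\<^sub>v x) + 2 * (x \<bullet> (B *\<^sub>v y)) * t + (y \<bullet> (B *\<^sub>v y)) * t^2"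
proof -
  have z: "x + t \<cdot>\<^sub>v y \<in> carrier_vec n" using x y by simp
  have "(x + t \<cdot>\<^sub>v y) \<bullet> (B *\<^sub>v (x + t \<cdot>\<^sub>v y)) =
     (\<Sum>i<n. \<Sum>j<n. B$$(i,j) * (x + t \<cdot>\<^sub>v y)$i * (x + t \<cdot>\<^sub>v y)$j)"
    by (rule bil_sum[OF B z z])
  also have "\<dots> = (\<Sum>i<n. \<Sum>j<n. B$$(i,j) * (x$i + t*y$i) * (x$j + t*y$j))"
    using x y by (intro sum.cong refl) simp
  also have "\<dots> = (\<Sum>i<n. \<Sum>j<n. B$$(i,j) * x$i * x$j) + t * (\<Sum>i<n. \<Sum>j<n. B$$(i,j) * x$i * y$j)
     + t * (\<Sum>i<n. \<Sum>j<n. B$$(i,j) * y$i * x$j) + t^2 * (\<Sum>i<n. \<Sum>j<n. B$$(i,j) * y$i * y$j)"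
    by (simp add: sum.distrib sum_distrib_left algebra_simps power2_eq_square)
  also have "\<dots> = x \<bullet> (B *\<^sub>v x) + t * (x \<bullet> (B *\<^sub>v y)) + t * (y \<bullet> (B *\<^sub>v x)) + t^2 * (y \<bullet> (B *\<^sub>v y))"
    using bil_sum[OF B x x] bil_sum[OF B x y] bil_sum[OF B y x] bil_sum[OF B y y] by simp
  also have "y \<bullet> (B *\<^sub>v x) = x \<bullet> (B *\<^sub>v y)" using bil_sym[OF B sym y x] .
  finally show ?thesis by (simp add: algebra_simps)
qed

lemma psd_cs:
  fixes B :: "real mat"
  assumes B: "B \<in> carrier_mat n n" and sym: "\<And>i j. i<n \<Longrightarrow> j<n \<Longrightarrow> B$$(i,j) = B$$(j,i)"
    and psd: "\<And>z. z \<in> carrier_vec n \<Longrightarrow> 0 \<le> z \<bullet> (B *\<^sub>v z)"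
    and x: "x \<in> carrier_vec n" and y: "y \<in> carrier_vec n"
  shows "(x \<bullet> (B *\<^sub>v y))^2 \<le> (x \<bullet> (B *\<^sub>v x)) * (y \<bullet> (B *\<^sub>v y))"
proof (rule quad_disc)
  fix t :: real
  have "0 \<le> (x + t \<cdot>\<^sub>v y) \<bullet> (B *\<^sub>v (x + t \<cdot>\<^sub>v y))" using x y by (intro psd) simp
  thus "0 \<le> x \<bullet> (B *\<^sub>v x) + 2 * (x \<bullet> (B *\<^sub>v y)) * t + (y \<bullet> (B *\<^sub>v y)) * t^2"
    using bil_expand[OF B sym x y] by simp
qed (rule psd[OF y])

lemma cs_vec:
  fixes x y :: "real vec"
  assumes x: "x \<in> carrier_vec n" and y: "y \<in> carrier_vec n"
  shows "(x \<bullet> y)^2 \<le> (x \<bullet> x) * (y \<bullet> y)"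
  using psd_cs[of "1\<^sub>m n" n x y] x y self_sp_nonneg by simp


definition Nm :: "nat \<Rightarrow> real mat \<Rightarrow> real" where
  "Nm n M = (\<Sum>i<n. \<Sum>j<n. \<bar>M$$(i,j)\<bar>)"

lemma Nm_entry: "i < n \<Longrightarrow> j < n \<Longrightarrow> \<bar>M$$(i,j)\<bar> \<le> Nm n M"
proof -
  assume i: "i < n" and j: "j < n"
  have "\<bar>M$$(i,j)\<bar> \<le> (\<Sum>j<n. \<bar>M$$(i,j)\<bar>)" using j by (intro member_le_sum) auto
  also have "\<dots> \<le> Nm n M" unfolding Nm_def using i
    by (intro member_le_sum[of i "{..<n}" "\<lambda>i. \<Sum>j<n. \<bar>M$$(i,j)\<bar>"]) (auto intro: sum_nonneg)
  finally show ?thesis .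
qed

lemma Nm_nonneg: "0 \<le> Nm n M" unfolding Nm_def by (intro sum_nonneg) auto

lemma qf_Nm:
  assumes M: "M \<in> carrier_mat n n" and v: "v \<in> carrier_vec n"
  shows "\<bar>v \<bullet> (M *\<^sub>v v)\<bar> \<le> Nm n M * n * (v \<bullet> v)"
  by (rule qf_bound[OF M v Nm_entry])

lemma eig_finite:
  fixes A :: "real mat"
  assumes A: "A \<in> carrier_mat n n"
  shows "finite {x. eigenvalue A x}"
proof -
  have "char_poly A \<noteq> 0" using degree_monic_char_poly[OF A] by auto
  hence "finite {x. poly (char_poly A) x = 0}" by (rule poly_roots_finite)
  thus ?thesis using eigenvalue_root_char_poly[OF A] by simp
qed

lemma rayleigh:
  fixes A :: "real mat"
  assumes A: "A \<in> carrier_mat n n" and sym: "\<And>i j. i<n \<Longrightarrow> j<n \<Longrightarrow> A$$(i,j) = A$$(j,i)"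
    and n: "0 < n"
  shows "\<exists>m. eigenvalue A m \<and> (\<forall>y\<in>carrier_vec n. m * (y \<bullet> y) \<le> y \<bullet> (A *\<^sub>v y))"
proof -
  define S where "S = {y \<bullet> (A *\<^sub>v y) | y. y \<in> carrier_vec n \<and> y \<bullet> y = 1}"
  define m where "m = Inf S"
  have e0: "unit_vec n 0 \<in> carrier_vec n" "unit_vec n 0 \<bullet> unit_vec n 0 = (1::real)"
    using n by auto
  hence Sne: "S \<noteq> {}" unfolding S_def by blast
  have bdd: "bdd_below S"
  proof (rule bdd_belowI)
    fix s assume "s \<in> S"
    then obtain y where y: "y \<in> carrier_vec n" "y \<bullet> y = 1" and s: "s = y \<bullet> (A *\<^sub>v y)"
      unfolding S_def by blast
    show "- (Nm n A * n) \<le> s" using qf_Nm[OF A y(1)] unfolding y(2) s by (simp add: abs_le_iff)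
  qed
  have mlow: "m \<le> y \<bullet> (A *\<^sub>v y)" if "y \<in> carrier_vec n" "y \<bullet> y = 1" for y
    unfolding m_def using that bdd by (intro cInf_lower) (auto simp: S_def)
  have claim1: "m * (y \<bullet> y) \<le> y \<bullet> (A *\<^sub>v y)" if y: "y \<in> carrier_vec n" for y
  proof (cases "y \<bullet> y = 0")
    case True
    thus ?thesis using qf_Nm[OF A y] by simp
  next
    case False
    define s where "s = y \<bullet> y"
    have sp: "s > 0" using False self_sp_nonneg[of y] unfolding s_def by simp
    define z where "z = (1 / sqrt s) \<cdot>\<^sub>v y"
    have z: "z \<in> carrier_vec n" using y unfolding z_def by simp
    have zz: "z \<bullet> z = 1" using y sp unfolding z_def s_def[symmetric]
      by (simp add: power2_eq_square[symmetric] s_def)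
    have "z \<bullet> (A *\<^sub>v z) = (1 / sqrt s) * (1 / sqrt s) * (y \<bullet> (A *\<^sub>v y))"
      using y A unfolding z_def by (simp add: mult_mat_vec[OF A y])
    also have "\<dots> = (y \<bullet> (A *\<^sub>v y)) / s" using sp by (simp add: power_divide)
    finally have "m \<le> (y \<bullet> (A *\<^sub>v y)) / s" using mlow[OF z zz] by simp
    thus ?thesis using sp unfolding s_def[symmetric] by (simp add: field_simps)
  qed
  define B where "B = A - m \<cdot>\<^sub>m 1\<^sub>m n"
  have B: "B \<in> carrier_mat n n" unfolding B_def using A by (intro minus_carrier_mat) auto
  have Bv: "B *\<^sub>v y = A *\<^sub>v y - m \<cdot>\<^sub>v y" if y: "y \<in> carrier_vec n" for y
    unfolding B_def using A y by (intro eq_vecI) (auto simp: minus_mult_distrib_mat_vec)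
  have qB: "y \<bullet> (B *\<^sub>v y) = y \<bullet> (A *\<^sub>v y) - m * (y \<bullet> y)" if y: "y \<in> carrier_vec n" for y
    using y A by (simp add: Bv scalar_prod_minus_distrib[of y n])
  have psd: "0 \<le> y \<bullet> (B *\<^sub>v y)" if y: "y \<in> carrier_vec n" for y
    using qB[OF y] claim1[OF y] by simp
  have symB: "B$$(i,j) = B$$(j,i)" if "i<n" "j<n" for i j
    using that A sym unfolding B_def by auto
  have "\<exists>x. x \<in> carrier_vec n \<and> x \<noteq> 0\<^sub>v n \<and> B *\<^sub>v x = 0\<^sub>v n"
  proof (rule ccontr)
    assume nk: "\<not> ?thesis"
    hence "det B \<noteq> 0" using det_0_iff_vec_prod_zero_field[OF B] by blast
    from det_non_zero_imp_unit[OF B this, of "()"]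
    obtain C where C: "C \<in> carrier_mat n n" and CB: "C * B = 1\<^sub>m n"
      unfolding Units_def ring_mat_def by auto
    define M where "M = Nm n B * n * (Nm n (C * C\<^sup>T) * n)"
    have M0: "0 \<le> M" unfolding M_def using Nm_nonneg by simp
    have key: "1 \<le> M * (y \<bullet> (B *\<^sub>v y))" if y: "y \<in> carrier_vec n" "y \<bullet> y = 1" for y
    proof -
      define x where "x = C\<^sup>T *\<^sub>v y"
      have x: "x \<in> carrier_vec n" unfolding x_def using C y by simp
      have "x \<bullet> (B *\<^sub>v y) = y \<bullet> (C *\<^sub>v (B *\<^sub>v y))"
        unfolding x_def using transpose_vec_mult_scalar[OF C _ y(1), of "B *\<^sub>v y"] B y by simp
      also have "\<dots> = y \<bullet> y" using C B y CB by (simp add: assoc_mult_mat_vec[symmetric])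
      finally have xBy: "x \<bullet> (B *\<^sub>v y) = 1" using y by simp
      have "x \<bullet> x = y \<bullet> (C *\<^sub>v x)"
        unfolding x_def using transpose_vec_mult_scalar[OF C _ y(1), of "C\<^sup>T *\<^sub>v y"] C y by simp
      also have "\<dots> = y \<bullet> ((C * C\<^sup>T) *\<^sub>v y)" unfolding x_def using C y by simp
      also have "\<dots> \<le> Nm n (C * C\<^sup>T) * n * (y \<bullet> y)" using qf_Nm[of "C * C\<^sup>T" n y] C y by simp
      finally have xx: "x \<bullet> x \<le> Nm n (C * C\<^sup>T) * n" using y by simp
      have "1 \<le> (x \<bullet> (B *\<^sub>v x)) * (y \<bullet> (B *\<^sub>v y))"
        using psd_cs[OF B symB psd x y(1)] xBy by simp
      also have "x \<bullet> (B *\<^sub>v x) \<le> Nm n B * n * (x \<bullet> x)" using qf_Nm[OF B x] by simp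
      also have "\<dots> \<le> Nm n B * n * (Nm n (C * C\<^sup>T) * n)"
        using xx Nm_nonneg by (intro mult_left_mono) auto
      finally show ?thesis unfolding M_def using psd[OF y(1)] by (simp add: mult_right_mono)
    qed
    have Mp: "0 < M" using key[OF e0] M0 by (cases "M = 0") auto
    have "m + 1 / M \<le> m" unfolding m_def
    proof (rule cInf_greatest[OF Sne])
      fix s assume "s \<in> S"
      then obtain y where y: "y \<in> carrier_vec n" "y \<bullet> y = 1" and s: "s = y \<bullet> (A *\<^sub>v y)"
        unfolding S_def by blast
      have "1 / M \<le> y \<bullet> (B *\<^sub>v y)" using key[OF y] Mp by (simp add: field_simps mult.commute)
      thus "Inf S + 1 / M \<le> s" using qB[OF y(1)] y(2) s unfolding m_def by simp
    qed
    thus False using Mp by simp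
  qed
  then obtain x where x: "x \<in> carrier_vec n" "x \<noteq> 0\<^sub>v n" "B *\<^sub>v x = 0\<^sub>v n" by blast
  have "A *\<^sub>v x = m \<cdot>\<^sub>v x"
  proof -
    have "A *\<^sub>v x - m \<cdot>\<^sub>v x = 0\<^sub>v n" using Bv[OF x(1)] x(3) by simp
    thus ?thesis using A x(1) by (metis carrier_vecD dim_mult_mat_vec carrier_matD(1) minus_cancel_vec smult_carrier_vec mult_mat_vec_carrier eq_vecI index_minus_vec index_zero_vec right_minus_eq)
  qed
  hence "eigenvalue A m" unfolding eigenvalue_def eigenvector_def using x A by auto
  thus ?thesis using claim1 by blast
qed

lemma lambdaK_le:
  fixes A :: "real mat"
  assumes A: "A \<in> carrier_mat n n" and sym: "A\<^sup>T = A" and n: "0 < n" and y: "y \<in> carrier_vec n"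
  shows "lambda_K A * (y \<bullet> y) \<le> y \<bullet> (A *\<^sub>v y)"
proof -
  have s: "\<And>i j. i<n \<Longrightarrow> j<n \<Longrightarrow> A$$(i,j) = A$$(j,i)"
    using sym A by (metis carrier_matD index_transpose_mat(1))
  obtain m where m: "eigenvalue A m" "\<forall>y\<in>carrier_vec n. m * (y \<bullet> y) \<le> y \<bullet> (A *\<^sub>v y)"
    using rayleigh[OF A s n] by blast
  have "lambda_K A \<le> m" unfolding lambda_K_def using eig_finite[OF A] m(1) by (intro Min_le) auto
  hence "lambda_K A * (y \<bullet> y) \<le> m * (y \<bullet> y)" using self_sp_nonneg[of y] by (intro mult_right_mono)
  thus ?thesis using m(2) y by fastforce
qed


lemma eig_col:
  assumes ed: "eigdecomp n K H V d" and k: "k < K"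
  shows "col V k \<in> carrier_vec n \<and> col V k \<bullet> col V k = 1 \<and> H *\<^sub>v col V k = d k \<cdot>\<^sub>v col V k"
proof -
  define Dm where "Dm = mat K K (\<lambda>(k,l). if k = l then d k else 0)"
  have V: "V \<in> carrier_mat n K" and VV: "V\<^sup>T * V = 1\<^sub>m K" and H: "H = V * Dm * V\<^sup>T"
    using ed unfolding eigdecomp_def Dm_def by auto
  have Dm: "Dm \<in> carrier_mat K K" unfolding Dm_def by simp
  have HV: "H * V = V * Dm"
  proof -
    have "H * V = V * Dm * (V\<^sup>T * V)" unfolding H using V Dm
      by (metis assoc_mult_mat mult_carrier_mat transpose_carrier_mat)
    also have "\<dots> = V * Dm" unfolding VV using V Dm by simp
    finally show ?thesis .
  qed
  have cv: "col V k \<in> carrier_vec n" unfolding carrier_vec_def using V by simp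
  have "H *\<^sub>v col V k = col (H * V) k"
    using col_mult2[of H n n V K k] H V Dm k by simp
  also have "\<dots> = col (V * Dm) k" unfolding HV ..
  also have "\<dots> = d k \<cdot>\<^sub>v col V k"
  proof (rule eq_vecI)
    fix i assume "i < dim_vec (d k \<cdot>\<^sub>v col V k)"
    hence i: "i < n" using V by simp
    have "col (V * Dm) k $ i = row V i \<bullet> col Dm k" using i k V Dm by simp
    also have "col Dm k = d k \<cdot>\<^sub>v unit_vec K k"
      unfolding Dm_def using k by (intro eq_vecI) auto
    also have "row V i \<bullet> (d k \<cdot>\<^sub>v unit_vec K k) = d k * V $$ (i,k)" using V i k by simp
    finally show "col (V * Dm) k $ i = (d k \<cdot>\<^sub>v col V k) $ i" using V i k by simp
  qed (use V Dm in simp)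
  finally have ev: "H *\<^sub>v col V k = d k \<cdot>\<^sub>v col V k" .
  have "col V k \<bullet> col V k = (V\<^sup>T * V) $$ (k,k)" using V k by simp
  also have "\<dots> = 1" unfolding VV using k by simp
  finally show ?thesis using cv ev by simp
qed

lemma core:
  fixes u w y :: "real vec"
  assumes u: "u \<in> carrier_vec K" and w: "w \<in> carrier_vec K" and y: "y \<in> carrier_vec K"
    and uu: "u \<bullet> u > 0" and dy: "d \<cdot>\<^sub>v u = y" and g: "g * (w \<bullet> w) \<le> w \<bullet> y"
    and s: "s * (u \<bullet> u) \<le> w \<bullet> w" and g0: "0 \<le> g" and s0: "0 \<le> s"
  shows "g^2 * s \<le> d^2"
proof -
  have wy: "w \<bullet> y = d * (w \<bullet> u)" unfolding dy[symmetric] using u w by simp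
  have cs: "(w \<bullet> u)^2 \<le> (w \<bullet> w) * (u \<bullet> u)" by (rule cs_vec[OF w u])
  have ww0: "0 \<le> w \<bullet> w" by (rule self_sp_nonneg)
  have "(g * (w \<bullet> w))^2 \<le> (w \<bullet> y)^2"
    using g g0 ww0 by (intro power_mono) auto
  also have "\<dots> = d^2 * (w \<bullet> u)^2" unfolding wy by (simp add: power_mult_distrib)
  also have "\<dots> \<le> d^2 * ((w \<bullet> w) * (u \<bullet> u))" using cs by (intro mult_left_mono) auto
  finally have main: "g^2 * (w \<bullet> w) * (w \<bullet> w) \<le> d^2 * (u \<bullet> u) * (w \<bullet> w)"
    by (simp add: power_mult_distrib power2_eq_square mult_ac)
  show ?thesis
  proof (cases "w \<bullet> w = 0")
    case True
    hence "s * (u \<bullet> u) \<le> 0" using s by simp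
    hence "s = 0" using uu s0 by (simp add: mult_le_0_iff)
    thus ?thesis by simp
  next
    case False
    hence wp: "w \<bullet> w > 0" using ww0 by simp
    have "g^2 * (w \<bullet> w) \<le> d^2 * (u \<bullet> u)" using main wp by simp
    moreover have "g^2 * s * (u \<bullet> u) \<le> g^2 * (w \<bullet> w)"
      using s by (simp add: mult.assoc mult_left_mono)
    ultimately have "g^2 * s * (u \<bullet> u) \<le> d^2 * (u \<bullet> u)" by linarith
    thus ?thesis using uu by simp
  qed
qed

lemma G0_entry:
  assumes Pm: "membership_mat n K Pm" and P: "conn_mat K P" and i: "i < n" and j: "j < n"
  shows "0 \<le> (Pm * P * Pm\<^sup>T) $$ (i,j) \<and> (Pm * P * Pm\<^sup>T) $$ (i,j) \<le> 1"
proof -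
  have Pmc: "Pm \<in> carrier_mat n K" and Pc: "P \<in> carrier_mat K K"
    and pos: "\<And>i k. i < n \<Longrightarrow> k < K \<Longrightarrow> 0 \<le> Pm $$ (i,k)"
    and s1: "\<And>i. i < n \<Longrightarrow> (\<Sum>k<K. Pm $$ (i,k)) = 1"
    and p01: "\<And>k l. k < K \<Longrightarrow> l < K \<Longrightarrow> 0 \<le> P $$ (k,l) \<and> P $$ (k,l) \<le> 1"
    using Pm P unfolding membership_mat_def conn_mat_def by auto
  have e: "(Pm * P * Pm\<^sup>T) $$ (i,j) = (\<Sum>k<K. \<Sum>l<K. Pm $$ (i,k) * P $$ (k,l) * Pm $$ (j,l))"
    using Pmc Pc i j by (simp add: scalar_prod_def atLeast0LessThan row_def col_def sum_distrib_left mult.assoc)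
  have "(\<Sum>k<K. \<Sum>l<K. Pm $$ (i,k) * P $$ (k,l) * Pm $$ (j,l)) \<le> (\<Sum>k<K. \<Sum>l<K. Pm $$ (i,k) * Pm $$ (j,l))"
  proof (intro sum_mono)
    fix k l assume k: "k \<in> {..<K}" and l: "l \<in> {..<K}"
    have "Pm $$ (i,k) * P $$ (k,l) \<le> Pm $$ (i,k)" using pos p01 i k l by (auto intro: mult_left_le)
    thus "Pm $$ (i,k) * P $$ (k,l) * Pm $$ (j,l) \<le> Pm $$ (i,k) * Pm $$ (j,l)"
      using pos j l by (intro mult_right_mono) auto
  qed
  also have "\<dots> = (\<Sum>k<K. Pm $$ (i,k)) * (\<Sum>l<K. Pm $$ (j,l))" by (simp add: sum_product)
  also have "\<dots> = 1" using s1[OF i] s1[OF j] by simp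
  finally have le: "(Pm * P * Pm\<^sup>T) $$ (i,j) \<le> 1" using e by simp
  have "0 \<le> (\<Sum>k<K. \<Sum>l<K. Pm $$ (i,k) * P $$ (k,l) * Pm $$ (j,l))"
    using pos p01 i j by (intro sum_nonneg mult_nonneg_nonneg) auto
  thus ?thesis using e le by simp
qed

lemma alpha_bound:
  assumes H: "H \<in> carrier_mat n n" and n: "0 < n" and b: "\<And>i j. i < n \<Longrightarrow> j < n \<Longrightarrow> H $$ (i,j) \<le> b"
  shows "alpha_sq H \<le> real n * b"
  unfolding alpha_sq_def
proof (subst Max_le_iff)
  show "\<forall>a\<in>(\<lambda>j. \<Sum>i<dim_row H. H $$ (i, j) * (1 - H $$ (i, j))) ` {..<dim_col H}. a \<le> real n * b"
  proof
    fix a assume "a \<in> (\<lambda>j. \<Sum>i<dim_row H. H $$ (i, j) * (1 - H $$ (i, j))) ` {..<dim_col H}"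
    then obtain j where j: "j < n" and a: "a = (\<Sum>i<n. H $$ (i, j) * (1 - H $$ (i, j)))" using H by auto
    have "a \<le> (\<Sum>i<n. b)" unfolding a
    proof (intro sum_mono)
      fix i assume "i \<in> {..<n}"
      hence "H $$ (i,j) \<le> b" using b j by auto
      moreover have "H $$ (i, j) * (1 - H $$ (i, j)) \<le> H $$ (i,j)"
        by (simp add: algebra_simps)
      ultimately show "H $$ (i, j) * (1 - H $$ (i, j)) \<le> b" by linarith
    qed
    thus "a \<le> real n * b" by simp
  qed
qed (use H n in auto)


lemma smult_mat_vec:
  fixes M :: "real mat"
  assumes "M \<in> carrier_mat n m" "v \<in> carrier_vec m"
  shows "(c \<cdot>\<^sub>m M) *\<^sub>v v = c \<cdot>\<^sub>v (M *\<^sub>v v)"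
  using assms by (intro eq_vecI) (auto simp: scalar_prod_def row_def sum_distrib_left mult.assoc)

lemma sq_to_abs:
  fixes a d :: real
  assumes "a^2 \<le> d^2" shows "a \<le> \<bar>d\<bar>"
  using assms by (metis abs_ge_zero power2_abs power2_le_imp_le)

lemma part1_inner:
  fixes K :: nat and c0 :: real and n :: nat and \<theta> :: real and Pm P V :: "real mat" and d :: "nat \<Rightarrow> real"
  assumes K: "0 < K" and c0: "0 < c0"
    and n: "0 < n" and th: "0 < \<theta>" and Pm: "membership_mat n K Pm" and P: "conn_mat K P"
    and ed: "eigdecomp n K (\<theta> \<cdot>\<^sub>m (Pm * P * Pm\<^sup>T)) V d"
    and lG: "lambda_K (Pm\<^sup>T * Pm) \<ge> c0 * real n" and lP: "lambda_K P \<ge> c0"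
  shows "alpha_sq (\<theta> \<cdot>\<^sub>m (Pm * P * Pm\<^sup>T)) \<le> real n * \<theta> \<and>
         (\<forall>k<K. c0^2 * (real n * \<theta>) \<le> \<bar>d k\<bar> \<and> \<bar>d k\<bar> \<le> 1 * (real n * \<theta>))"
proof -
  define G0 where "G0 = Pm * P * Pm\<^sup>T"
  define H where "H = \<theta> \<cdot>\<^sub>m G0"
  have Pmc: "Pm \<in> carrier_mat n K" and Pc: "P \<in> carrier_mat K K" and Psym: "P\<^sup>T = P"
    and dP: "det P \<noteq> 0"
    using Pm P unfolding membership_mat_def conn_mat_def by auto
  have G0c: "G0 \<in> carrier_mat n n" unfolding G0_def using Pmc Pc by simp
  have Hc: "H \<in> carrier_mat n n" unfolding H_def using G0c by simp
  have Hent: "H $$ (i,j) = \<theta> * G0 $$ (i,j)" if "i < n" "j < n" for i j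
    unfolding H_def using that G0c by simp
  have Hb: "\<bar>H $$ (i,j)\<bar> \<le> \<theta>" if "i < n" "j < n" for i j
    using Hent[OF that] G0_entry[OF Pm P that] th unfolding G0_def
    by (simp add: abs_mult mult_left_le)
  have alpha: "alpha_sq H \<le> real n * \<theta>"
    by (rule alpha_bound[OF Hc n]) (use Hb in \<open>auto simp: abs_le_iff\<close>)
  have ev: "c0^2 * (real n * \<theta>) \<le> \<bar>d k\<bar> \<and> \<bar>d k\<bar> \<le> 1 * (real n * \<theta>)" if k: "k < K" for k
  proof -
    define v where "v = col V k"
    have v: "v \<in> carrier_vec n" and vv: "v \<bullet> v = 1" and Hv: "H *\<^sub>v v = d k \<cdot>\<^sub>v v"
      using eig_col[OF ed k] unfolding v_def H_def G0_def by auto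
    have dk0: "d k \<noteq> 0" using ed k unfolding eigdecomp_def by auto
    have dvHv: "d k = v \<bullet> (H *\<^sub>v v)" unfolding Hv using v vv by simp
    have upper: "\<bar>d k\<bar> \<le> real n * \<theta>"
      using qf_bound[OF Hc v Hb] vv dvHv by (simp add: mult.commute)
    define u where "u = Pm\<^sup>T *\<^sub>v v"
    define w where "w = P *\<^sub>v u"
    define Gm where "Gm = Pm\<^sup>T * Pm"
    define y where "y = \<theta> \<cdot>\<^sub>v (Gm *\<^sub>v w)"
    have u: "u \<in> carrier_vec K" unfolding u_def using Pmc v by simp
    have w: "w \<in> carrier_vec K" unfolding w_def using Pc u by simp
    have Gmc: "Gm \<in> carrier_mat K K" unfolding Gm_def using Pmc by simp
    have y: "y \<in> carrier_vec K" unfolding y_def using Gmc w by simp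
    have HvPw: "H *\<^sub>v v = \<theta> \<cdot>\<^sub>v (Pm *\<^sub>v w)"
    proof -
      have "H *\<^sub>v v = \<theta> \<cdot>\<^sub>v (G0 *\<^sub>v v)" unfolding H_def by (rule smult_mat_vec[OF G0c v])
      also have "G0 *\<^sub>v v = (Pm * P) *\<^sub>v (Pm\<^sup>T *\<^sub>v v)" unfolding G0_def
        by (rule assoc_mult_mat_vec[of _ n K _ n]) (use Pmc Pc v in auto)
      also have "\<dots> = Pm *\<^sub>v w" unfolding w_def u_def
        by (rule assoc_mult_mat_vec[of _ n K _ K]) (use Pmc Pc v in auto)
      finally show ?thesis .
    qed
    have dy: "d k \<cdot>\<^sub>v u = y"
    proof -
      have "d k \<cdot>\<^sub>v u = Pm\<^sup>T *\<^sub>v (d k \<cdot>\<^sub>v v)" unfolding u_def using Pmc v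
        by (simp add: mult_mat_vec[of _ K n])
      also have "\<dots> = Pm\<^sup>T *\<^sub>v (\<theta> \<cdot>\<^sub>v (Pm *\<^sub>v w))" unfolding HvPw[symmetric] Hv ..
      also have "\<dots> = \<theta> \<cdot>\<^sub>v (Pm\<^sup>T *\<^sub>v (Pm *\<^sub>v w))" using Pmc w
        by (simp add: mult_mat_vec[of _ K n])
      also have "\<dots> = y" unfolding y_def Gm_def using Pmc w by simp
      finally show ?thesis .
    qed
    have duw: "d k = \<theta> * (u \<bullet> w)"
    proof -
      have "d k = v \<bullet> (\<theta> \<cdot>\<^sub>v (Pm *\<^sub>v w))" using dvHv HvPw by simp
      also have "\<dots> = \<theta> * (v \<bullet> (Pm *\<^sub>v w))" using Pmc w v by simp
      also have "v \<bullet> (Pm *\<^sub>v w) = u \<bullet> w" unfolding u_def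
        using transpose_vec_mult_scalar[OF Pmc w v] by simp
      finally show ?thesis .
    qed
    have uw0: "u \<bullet> w \<noteq> 0" using duw dk0 by auto
    have cs: "(u \<bullet> w)^2 \<le> (u \<bullet> u) * (w \<bullet> w)" by (rule cs_vec[OF u w])
    have uu: "u \<bullet> u > 0"
    proof -
      have "(u \<bullet> w)^2 > 0" using uw0 by simp
      hence "u \<bullet> u \<noteq> 0" using cs by auto
      thus ?thesis using self_sp_nonneg[of u] by simp
    qed
    have uPu: "c0 * (u \<bullet> u) \<le> u \<bullet> w"
    proof -
      have "c0 * (u \<bullet> u) \<le> lambda_K P * (u \<bullet> u)" using lP uu by (intro mult_right_mono) auto
      also have "\<dots> \<le> u \<bullet> (P *\<^sub>v u)" by (rule lambdaK_le[OF Pc Psym K u])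
      finally show ?thesis unfolding w_def .
    qed
    have s: "c0^2 * (u \<bullet> u) \<le> w \<bullet> w"
    proof -
      have "(c0 * (u \<bullet> u))^2 \<le> (u \<bullet> w)^2" using uPu c0 uu by (intro power_mono) auto
      hence "c0^2 * (u \<bullet> u) * (u \<bullet> u) \<le> (w \<bullet> w) * (u \<bullet> u)" using cs
        by (simp add: power_mult_distrib power2_eq_square mult_ac)
      thus ?thesis using uu by simp
    qed
    have Gsym: "Gm\<^sup>T = Gm" unfolding Gm_def using Pmc by (simp add: transpose_mult[of _ K n])
    have g: "(\<theta> * (c0 * real n)) * (w \<bullet> w) \<le> w \<bullet> y"
    proof -
      have "c0 * real n * (w \<bullet> w) \<le> lambda_K Gm * (w \<bullet> w)" using lG self_sp_nonneg[of w]
        unfolding Gm_def by (intro mult_right_mono) auto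
      also have "\<dots> \<le> w \<bullet> (Gm *\<^sub>v w)" by (rule lambdaK_le[OF Gmc Gsym K w])
      finally have "\<theta> * (c0 * real n * (w \<bullet> w)) \<le> \<theta> * (w \<bullet> (Gm *\<^sub>v w))" using th
        by (intro mult_left_mono) auto
      thus ?thesis unfolding y_def using Gmc w by (simp add: mult.assoc)
    qed
    have "(\<theta> * (c0 * real n))^2 * c0^2 \<le> (d k)^2"
      by (rule core[OF u w y uu dy g s]) (use th c0 in auto)
    hence "(c0^2 * (real n * \<theta>))^2 \<le> (d k)^2" by (simp add: power_mult_distrib mult_ac)
    hence "c0^2 * (real n * \<theta>) \<le> \<bar>d k\<bar>" by (rule sq_to_abs)
    thus ?thesis using upper by simp
  qed
  show ?thesis using alpha ev unfolding H_def G0_def by blast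
qed


lemma P_lower:
  fixes P :: "real mat"
  assumes P: "P \<in> carrier_mat K K" and dP: "det P \<noteq> 0"
  shows "\<exists>s>0. \<forall>u\<in>carrier_vec K. s * (u \<bullet> u) \<le> (P *\<^sub>v u) \<bullet> (P *\<^sub>v u)"
proof -
  from det_non_zero_imp_unit[OF P dP, of "()"]
  obtain C where C: "C \<in> carrier_mat K K" and CP: "C * P = 1\<^sub>m K"
    unfolding Units_def ring_mat_def by auto
  define N where "N = Nm K (C\<^sup>T * C) * K"
  have N0: "0 \<le> N" unfolding N_def using Nm_nonneg by simp
  define s where "s = 1 / (N + 1)"
  have sp: "s > 0" unfolding s_def using N0 by simp
  have sN: "s * N \<le> 1" unfolding s_def using N0 by (simp add: field_simps)
  show ?thesis
  proof (intro exI[of _ s] conjI ballI sp)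
    fix u :: "real vec" assume u: "u \<in> carrier_vec K"
    define w where "w = P *\<^sub>v u"
    have w: "w \<in> carrier_vec K" unfolding w_def using P u by simp
    have uCw: "u = C *\<^sub>v w" unfolding w_def using C P u CP
      by (simp add: assoc_mult_mat_vec[symmetric, of C K K P K u])
    have "u \<bullet> u = (C\<^sup>T *\<^sub>v (C *\<^sub>v w)) \<bullet> w"
      using transpose_vec_mult_scalar[OF C w, of "C *\<^sub>v w"] C w uCw by simp
    also have "\<dots> = w \<bullet> (C\<^sup>T *\<^sub>v (C *\<^sub>v w))" using C w by (intro comm_scalar_prod[of _ K]) auto
    also have "\<dots> = w \<bullet> ((C\<^sup>T * C) *\<^sub>v w)" using C w by simp
    also have "\<dots> \<le> N * (w \<bullet> w)" unfolding N_def using qf_Nm[of "C\<^sup>T * C" K w] C w by simp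
    finally have "u \<bullet> u \<le> N * (w \<bullet> w)" .
    hence "s * (u \<bullet> u) \<le> s * N * (w \<bullet> w)" using sp by (simp add: mult.assoc)
    also have "\<dots> \<le> w \<bullet> w" using sN self_sp_nonneg[of w] using mult_right_mono[of "s * N" 1 "w \<bullet> w"] by simp
    finally show "s * (u \<bullet> u) \<le> (P *\<^sub>v u) \<bullet> (P *\<^sub>v u)" unfolding w_def .
  qed
qed

lemma pure_row:
  assumes Pm: "membership_mat n K Pm" and i: "i \<in> pure_nodes n Pm k" and k: "k < K"
    and l: "l < K" "l \<noteq> k"
  shows "Pm $$ (i,l) = 0"
proof -
  have i': "i < n" and ik: "Pm $$ (i,k) = 1" using i unfolding pure_nodes_def by auto
  have pos: "\<And>l. l < K \<Longrightarrow> 0 \<le> Pm $$ (i,l)" and s1: "(\<Sum>l<K. Pm $$ (i,l)) = 1"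
    using Pm i' unfolding membership_mat_def by auto
  have "(\<Sum>l<K. Pm $$ (i,l)) = Pm $$ (i,k) + (\<Sum>l\<in>{..<K}-{k}. Pm $$ (i,l))"
    using k by (simp add: sum.remove)
  hence z: "(\<Sum>l\<in>{..<K}-{k}. Pm $$ (i,l)) = 0" using s1 ik by simp
  have "\<forall>l\<in>{..<K}-{k}. Pm $$ (i,l) = 0"
    using z pos by (subst sum_nonneg_eq_0_iff[symmetric]) auto
  thus ?thesis using l by auto
qed

lemma pure_bound:
  fixes w :: "real vec"
  assumes Pm: "membership_mat n K Pm" and pc: "\<forall>k<K. c2 * real n \<le> real (card (pure_nodes n Pm k))"
    and w: "w \<in> carrier_vec K"
  shows "c2 * real n * (w \<bullet> w) \<le> (\<Sum>i<n. ((Pm *\<^sub>v w) $ i)^2)"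
proof -
  have Pmc: "Pm \<in> carrier_mat n K" using Pm unfolding membership_mat_def by auto
  let ?N = "pure_nodes n Pm"
  let ?f = "\<lambda>i. ((Pm *\<^sub>v w) $ i)^2"
  have fin: "finite (?N k)" for k unfolding pure_nodes_def by auto
  have sub: "?N k \<subseteq> {..<n}" for k unfolding pure_nodes_def by auto
  have val: "(Pm *\<^sub>v w) $ i = w $ k" if i: "i \<in> ?N k" and k: "k < K" for i k
  proof -
    have i': "i < n" and ik: "Pm $$ (i,k) = 1" using i unfolding pure_nodes_def by auto
    have "(Pm *\<^sub>v w) $ i = (\<Sum>l<K. Pm $$ (i,l) * w $ l)"
      using Pmc w i' by (simp add: scalar_prod_def row_def atLeast0LessThan)
    also have "\<dots> = Pm $$ (i,k) * w $ k + (\<Sum>l\<in>{..<K}-{k}. Pm $$ (i,l) * w $ l)"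
      using k by (simp add: sum.remove)
    also have "(\<Sum>l\<in>{..<K}-{k}. Pm $$ (i,l) * w $ l) = 0"
      using pure_row[OF Pm i k] by (intro sum.neutral) auto
    finally show ?thesis using ik by simp
  qed
  have disj: "\<forall>k\<in>{..<K}. \<forall>l\<in>{..<K}. k \<noteq> l \<longrightarrow> ?N k \<inter> ?N l = {}"
  proof (intro ballI impI)
    fix k l assume k: "k \<in> {..<K}" and l: "l \<in> {..<K}" and kl: "k \<noteq> l"
    show "?N k \<inter> ?N l = {}"
    proof (rule ccontr)
      assume "?N k \<inter> ?N l \<noteq> {}"
      then obtain i where i: "i \<in> ?N k" "i \<in> ?N l" by blast
      have "Pm $$ (i,l) = 0" using pure_row[OF Pm i(1), of l] k l kl by auto
      moreover have "Pm $$ (i,l) = 1" using i(2) unfolding pure_nodes_def by auto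
      ultimately show False by simp
    qed
  qed
  have "c2 * real n * (w \<bullet> w) = (\<Sum>k<K. c2 * real n * (w $ k)^2)"
    using w by (simp add: sp_sum sum_distrib_left power2_eq_square)
  also have "\<dots> \<le> (\<Sum>k<K. real (card (?N k)) * (w $ k)^2)"
    using pc by (intro sum_mono mult_right_mono) auto
  also have "\<dots> = (\<Sum>k<K. \<Sum>i\<in>?N k. ?f i)"
    using val by (intro sum.cong refl) simp
  also have "\<dots> = sum ?f (\<Union>k\<in>{..<K}. ?N k)"
    by (rule sum.UNION_disjoint[symmetric]) (use fin disj in auto)
  also have "\<dots> \<le> (\<Sum>i<n. ?f i)"
    by (rule sum_mono2) (use sub in auto)
  finally show ?thesis .
qed


lemma triple_entry:
  fixes A P :: "real mat"
  assumes A: "A \<in> carrier_mat n K" and P: "P \<in> carrier_mat K K" and i: "i < n" and j: "j < n"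
  shows "(A * P * A\<^sup>T) $$ (i,j) = (\<Sum>k<K. \<Sum>l<K. A $$ (i,k) * P $$ (k,l) * A $$ (j,l))"
  using A P i j by (simp add: scalar_prod_def atLeast0LessThan row_def col_def sum_distrib_left mult.assoc)

lemma diag_mult:
  fixes M :: "real mat"
  assumes M: "M \<in> carrier_mat n K"
  shows "diag_of n th * M = mat n K (\<lambda>(i,k). th i * M $$ (i,k))"
proof (rule eq_matI)
  fix i k assume i: "i < dim_row (mat n K (\<lambda>(i,k). th i * M $$ (i,k)))"
    and k: "k < dim_col (mat n K (\<lambda>(i,k). th i * M $$ (i,k)))"
  hence i: "i < n" and k: "k < K" by auto
  have r: "row (diag_of n th) i = th i \<cdot>\<^sub>v unit_vec n i"
    unfolding diag_of_def using i by (intro eq_vecI) auto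
  have "(diag_of n th * M) $$ (i,k) = row (diag_of n th) i \<bullet> col M k"
    using i k M unfolding diag_of_def by simp
  also have "\<dots> = th i * M $$ (i,k)" unfolding r using M i k by simp
  finally show "(diag_of n th * M) $$ (i,k) = mat n K (\<lambda>(i,k). th i * M $$ (i,k)) $$ (i,k)"
    using i k by simp
qed (use M in \<open>auto simp: diag_of_def\<close>)

lemma part2_inner:
  fixes K :: nat and c2 c4 s :: real and n :: nat and th :: "nat \<Rightarrow> real" and Pm P V :: "real mat"
    and d :: "nat \<Rightarrow> real"
  assumes K: "0 < K" and c2: "0 < c2" and c4: "0 < c4" and sp: "0 < s"
    and sP: "\<forall>u\<in>carrier_vec K. s * (u \<bullet> u) \<le> (P *\<^sub>v u) \<bullet> (P *\<^sub>v u)"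
    and P: "conn_mat K P"
    and n: "0 < n" and thp: "\<forall>i<n. 0 < th i" and Pm: "membership_mat n K Pm"
    and ed: "eigdecomp n K (H_dcmm n th Pm P) V d"
    and pc: "\<forall>k<K. real (card (pure_nodes n Pm k)) \<ge> c2 * real n"
    and tmc: "theta_max n th \<le> c4 * theta_min n th"
  shows "alpha_sq (H_dcmm n th Pm P) \<le> real n * (theta_max n th)\<^sup>2 \<and>
    (\<forall>k<K. (c2 * sqrt s / c4^2) * (real n * (theta_max n th)\<^sup>2) \<le> \<bar>d k\<bar> \<and>
       \<bar>d k\<bar> \<le> 1 * (real n * (theta_max n th)\<^sup>2))"
proof -
  define tM where "tM = theta_max n th"
  define tm where "tm = theta_min n th"
  have fin: "finite (th ` {..<n})" and ne: "th ` {..<n} \<noteq> {}" using n by auto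
  have tle: "tm \<le> th i \<and> th i \<le> tM" if "i < n" for i
    unfolding tm_def tM_def theta_min_def theta_max_def using that fin by auto
  have tmp: "0 < tm" unfolding tm_def theta_min_def using fin ne thp by (subst Min_gr_iff) auto
  have tMp: "0 < tM" using tle[OF n] tmp by linarith
  have Pmc: "Pm \<in> carrier_mat n K" and Pc: "P \<in> carrier_mat K K"
    using Pm P unfolding membership_mat_def conn_mat_def by auto
  define Th where "Th = diag_of n th"
  have Thc: "Th \<in> carrier_mat n n" unfolding Th_def diag_of_def by simp
  have ThT: "Th\<^sup>T = Th" unfolding Th_def diag_of_def by (intro eq_matI) auto
  define A where "A = Th * Pm"
  have Ac: "A \<in> carrier_mat n K" unfolding A_def using Thc Pmc by simp
  have Aent: "A $$ (i,k) = th i * Pm $$ (i,k)" if "i < n" "k < K" for i k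
    unfolding A_def Th_def using diag_mult[OF Pmc, of th] that by simp
  define H where "H = H_dcmm n th Pm P"
  have HA: "H = A * P * A\<^sup>T"
  proof -
    have "A\<^sup>T = Pm\<^sup>T * Th" unfolding A_def using transpose_mult[OF Thc Pmc] ThT by simp
    hence "A * P * A\<^sup>T = (A * P) * (Pm\<^sup>T * Th)" by simp
    also have "\<dots> = ((A * P) * Pm\<^sup>T) * Th" using Ac Pc Pmc Thc
      by (intro assoc_mult_mat[symmetric, of _ n K _ n _ n]) auto
    finally show ?thesis unfolding H_def H_dcmm_def A_def Th_def by simp
  qed
  have Hc: "H \<in> carrier_mat n n" unfolding HA using Ac Pc by simp
  have Hent: "H $$ (i,j) = th i * th j * (Pm * P * Pm\<^sup>T) $$ (i,j)" if i: "i < n" and j: "j < n" for i j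
  proof -
    have "H $$ (i,j) = (\<Sum>k<K. \<Sum>l<K. A $$ (i,k) * P $$ (k,l) * A $$ (j,l))"
      unfolding HA by (rule triple_entry[OF Ac Pc i j])
    also have "\<dots> = (\<Sum>k<K. \<Sum>l<K. th i * th j * (Pm $$ (i,k) * P $$ (k,l) * Pm $$ (j,l)))"
      using Aent i j by (intro sum.cong refl) (simp add: mult_ac)
    also have "\<dots> = th i * th j * (\<Sum>k<K. \<Sum>l<K. Pm $$ (i,k) * P $$ (k,l) * Pm $$ (j,l))"
      by (simp add: sum_distrib_left)
    also have "\<dots> = th i * th j * (Pm * P * Pm\<^sup>T) $$ (i,j)"
      using triple_entry[OF Pmc Pc i j] by simp
    finally show ?thesis .
  qed
  have Hb: "\<bar>H $$ (i,j)\<bar> \<le> tM^2" if i: "i < n" and j: "j < n" for i j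
  proof -
    have g: "0 \<le> (Pm * P * Pm\<^sup>T) $$ (i,j) \<and> (Pm * P * Pm\<^sup>T) $$ (i,j) \<le> 1"
      by (rule G0_entry[OF Pm P i j])
    have ti: "0 < th i" "th i \<le> tM" and tj: "0 < th j" "th j \<le> tM" using thp tle i j by auto
    have "th i * th j \<le> tM * tM" using ti tj by (intro mult_mono) auto
    have "0 \<le> H $$ (i,j)" unfolding Hent[OF i j] using g ti tj by simp
    moreover have "H $$ (i,j) \<le> th i * th j" unfolding Hent[OF i j] using g ti tj
      by (simp add: mult_left_le)
    moreover have "th i * th j \<le> tM * tM" using ti tj by (intro mult_mono) auto
    ultimately show ?thesis by (simp add: power2_eq_square)
  qed
  have alpha: "alpha_sq H \<le> real n * tM^2"
    by (rule alpha_bound[OF Hc n]) (use Hb in \<open>auto simp: abs_le_iff\<close>)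
  have ev: "(c2 * sqrt s / c4^2) * (real n * tM^2) \<le> \<bar>d k\<bar> \<and> \<bar>d k\<bar> \<le> 1 * (real n * tM^2)"
    if k: "k < K" for k
  proof -
    define v where "v = col V k"
    have v: "v \<in> carrier_vec n" and vv: "v \<bullet> v = 1" and Hv: "H *\<^sub>v v = d k \<cdot>\<^sub>v v"
      using eig_col[OF ed k] unfolding v_def H_def by auto
    have dk0: "d k \<noteq> 0" using ed k unfolding eigdecomp_def by auto
    have dvHv: "d k = v \<bullet> (H *\<^sub>v v)" unfolding Hv using v vv by simp
    have upper: "\<bar>d k\<bar> \<le> real n * tM^2"
      using qf_bound[OF Hc v Hb] vv dvHv by (simp add: mult.commute)
    define u where "u = A\<^sup>T *\<^sub>v v"
    define w where "w = P *\<^sub>v u"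
    define y where "y = A\<^sup>T *\<^sub>v (A *\<^sub>v w)"
    have u: "u \<in> carrier_vec K" unfolding u_def using Ac v by simp
    have w: "w \<in> carrier_vec K" unfolding w_def using Pc u by simp
    have Aw: "A *\<^sub>v w \<in> carrier_vec n" using Ac w by simp
    have y: "y \<in> carrier_vec K" unfolding y_def using Ac w by simp
    have HvAw: "H *\<^sub>v v = A *\<^sub>v w"
    proof -
      have "H *\<^sub>v v = (A * P) *\<^sub>v (A\<^sup>T *\<^sub>v v)" unfolding HA
        by (rule assoc_mult_mat_vec[of _ n K _ n]) (use Ac Pc v in auto)
      also have "\<dots> = A *\<^sub>v w" unfolding w_def u_def
        by (rule assoc_mult_mat_vec[of _ n K _ K]) (use Ac Pc v in auto)
      finally show ?thesis .
    qed
    have dy: "d k \<cdot>\<^sub>v u = y"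
    proof -
      have "d k \<cdot>\<^sub>v u = A\<^sup>T *\<^sub>v (d k \<cdot>\<^sub>v v)" unfolding u_def using Ac v
        by (simp add: mult_mat_vec[of _ K n])
      also have "\<dots> = y" unfolding y_def Hv[symmetric] HvAw ..
      finally show ?thesis .
    qed
    have duw: "d k = u \<bullet> w"
    proof -
      have "d k = v \<bullet> (A *\<^sub>v w)" using dvHv HvAw by simp
      also have "\<dots> = u \<bullet> w" unfolding u_def
        using transpose_vec_mult_scalar[OF Ac w v] by simp
      finally show ?thesis .
    qed
    have uw0: "u \<bullet> w \<noteq> 0" using duw dk0 by auto
    have cs: "(u \<bullet> w)^2 \<le> (u \<bullet> u) * (w \<bullet> w)" by (rule cs_vec[OF u w])
    have uu: "u \<bullet> u > 0"
    proof -
      have "(u \<bullet> w)^2 > 0" using uw0 by simp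
      hence "u \<bullet> u \<noteq> 0" using cs by auto
      thus ?thesis using self_sp_nonneg[of u] by simp
    qed
    have s: "s * (u \<bullet> u) \<le> w \<bullet> w" using sP u unfolding w_def by auto
    have wy: "w \<bullet> y = (A *\<^sub>v w) \<bullet> (A *\<^sub>v w)"
    proof -
      have "w \<bullet> y = y \<bullet> w" using w y by (rule comm_scalar_prod)
      also have "\<dots> = (A *\<^sub>v w) \<bullet> (A *\<^sub>v w)" unfolding y_def
        by (rule transpose_vec_mult_scalar[OF Ac w Aw])
      finally show ?thesis .
    qed
    have Awi: "(A *\<^sub>v w) $ i = th i * (Pm *\<^sub>v w) $ i" if i: "i < n" for i
    proof -
      have "(A *\<^sub>v w) $ i = (\<Sum>l<K. A $$ (i,l) * w $ l)"
        using Ac w i by (simp add: scalar_prod_def row_def atLeast0LessThan)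
      also have "\<dots> = th i * (\<Sum>l<K. Pm $$ (i,l) * w $ l)"
        using Aent i by (simp add: sum_distrib_left mult.assoc)
      also have "(\<Sum>l<K. Pm $$ (i,l) * w $ l) = (Pm *\<^sub>v w) $ i"
        using Pmc w i by (simp add: scalar_prod_def row_def atLeast0LessThan)
      finally show ?thesis .
    qed
    have g: "(tm^2 * (c2 * real n)) * (w \<bullet> w) \<le> w \<bullet> y"
    proof -
      have "(tm^2 * (c2 * real n)) * (w \<bullet> w) = tm^2 * (c2 * real n * (w \<bullet> w))" by simp
      also have "\<dots> \<le> tm^2 * (\<Sum>i<n. ((Pm *\<^sub>v w) $ i)^2)"
        using pure_bound[OF Pm pc w] by (intro mult_left_mono) auto
      also have "\<dots> = (\<Sum>i<n. tm^2 * ((Pm *\<^sub>v w) $ i)^2)" by (simp add: sum_distrib_left)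
      also have "\<dots> \<le> (\<Sum>i<n. (th i)^2 * ((Pm *\<^sub>v w) $ i)^2)"
      proof (intro sum_mono mult_right_mono)
        fix i assume "i \<in> {..<n}"
        thus "tm^2 \<le> (th i)^2" using tle tmp by (intro power_mono) auto
      qed auto
      also have "\<dots> = (A *\<^sub>v w) \<bullet> (A *\<^sub>v w)"
        using Aw Awi by (simp add: sp_sum power_mult_distrib power2_eq_square mult_ac)
      finally show ?thesis using wy by simp
    qed
    have "(tm^2 * (c2 * real n))^2 * s \<le> (d k)^2"
      by (rule core[OF u w y uu dy g s]) (use c2 sp in auto)
    hence "(tm^2 * (c2 * real n) * sqrt s)^2 \<le> (d k)^2" using sp by (simp add: power_mult_distrib)
    hence low: "tm^2 * (c2 * real n) * sqrt s \<le> \<bar>d k\<bar>" by (rule sq_to_abs)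
    have "tM^2 \<le> (c4 * tm)^2" using tmc tMp unfolding tM_def[symmetric] tm_def[symmetric]
      by (intro power_mono) auto
    hence "tM^2 / c4^2 \<le> tm^2" using c4 by (simp add: field_simps power_mult_distrib)
    hence "(tM^2 / c4^2) * (c2 * real n * sqrt s) \<le> tm^2 * (c2 * real n * sqrt s)"
      using c2 sp by (intro mult_right_mono) auto
    hence "(c2 * sqrt s / c4^2) * (real n * tM^2) \<le> \<bar>d k\<bar>" using low by (simp add: mult_ac)
    thus ?thesis using upper by simp
  qed
  show ?thesis using alpha ev unfolding H_def tM_def by blast
qed

theorem lemma8:
  fixes K :: nat and c0 c1 c2 c3 c4 :: real
  assumes "0 < K"
  shows
   "(0 < c0 \<and> c0 < 1 \<and> 0 < c1 \<and> c1 < 1 \<longrightarrow>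
      (\<exists>c C. 0 < c \<and> 0 < C \<and>
        (\<forall>(n::nat) (\<theta>::real) Pm P V d.
          0 < n \<and> 0 < \<theta> \<and> membership_mat n K Pm \<and> conn_mat K P \<and>
          prob_mat n (\<theta> \<cdot>\<^sub>m (Pm * P * Pm\<^sup>T)) \<and>
          eigdecomp n K (\<theta> \<cdot>\<^sub>m (Pm * P * Pm\<^sup>T)) V d \<and>
          lambda_K (Pm\<^sup>T * Pm) \<ge> c0 * real n \<and> lambda_K P \<ge> c0 \<and>
          \<theta> \<ge> real n powr (- c1)
          \<longrightarrow> alpha_sq (\<theta> \<cdot>\<^sub>m (Pm * P * Pm\<^sup>T)) \<le> real n * \<theta> \<and>
              (\<forall>k<K. c * (real n * \<theta>) \<le> \<bar>d k\<bar> \<and> \<bar>d k\<bar> \<le> C * (real n * \<theta>)))))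
    \<and>
    (\<forall>P. conn_mat K P \<and> 0 < c2 \<and> c2 < 1 \<and> 0 < c3 \<and> c3 < 1 \<and> 0 < c4 \<longrightarrow>
      (\<exists>c C. 0 < c \<and> 0 < C \<and>
        (\<forall>(n::nat) (th::nat \<Rightarrow> real) Pm V d.
          0 < n \<and> (\<forall>i<n. 0 < th i) \<and> membership_mat n K Pm \<and>
          prob_mat n (H_dcmm n th Pm P) \<and> eigdecomp n K (H_dcmm n th Pm P) V d \<and>
          (\<forall>k<K. real (card (pure_nodes n Pm k)) \<ge> c2 * real n) \<and>
          (theta_max n th) \<le> c4 * (theta_min n th) \<and> (theta_min n th)\<^sup>2 \<ge> real n powr (- c3)
          \<longrightarrow> alpha_sq (H_dcmm n th Pm P) \<le> real n * (theta_max n th)\<^sup>2 \<and>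
              (\<forall>k<K. c * (real n * (theta_max n th)\<^sup>2) \<le> \<bar>d k\<bar> \<and> \<bar>d k\<bar> \<le> C * (real n * (theta_max n th)\<^sup>2)))))"
proof -
  have p1: "(0 < c0 \<and> c0 < 1 \<and> 0 < c1 \<and> c1 < 1 \<longrightarrow>
      (\<exists>c C. 0 < c \<and> 0 < C \<and>
        (\<forall>(n::nat) (\<theta>::real) Pm P V d.
          0 < n \<and> 0 < \<theta> \<and> membership_mat n K Pm \<and> conn_mat K P \<and>
          prob_mat n (\<theta> \<cdot>\<^sub>m (Pm * P * Pm\<^sup>T)) \<and>
          eigdecomp n K (\<theta> \<cdot>\<^sub>m (Pm * P * Pm\<^sup>T)) V d \<and>
          lambda_K (Pm\<^sup>T * Pm) \<ge> c0 * real n \<and> lambda_K P \<ge> c0 \<and>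
          \<theta> \<ge> real n powr (- c1)
          \<longrightarrow> alpha_sq (\<theta> \<cdot>\<^sub>m (Pm * P * Pm\<^sup>T)) \<le> real n * \<theta> \<and>
              (\<forall>k<K. c * (real n * \<theta>) \<le> \<bar>d k\<bar> \<and> \<bar>d k\<bar> \<le> C * (real n * \<theta>)))))"
    apply (rule impI)
    apply (rule exI[of _ "c0^2"], rule exI[of _ 1])
    apply (intro conjI)
      apply simp
     apply simp
    apply (intro allI impI)
    subgoal for n \<theta> Pm P V d
      using part1_inner[OF assms, of c0 n \<theta> Pm P V d] by auto
    done
  have p2: "(\<forall>P. conn_mat K P \<and> 0 < c2 \<and> c2 < 1 \<and> 0 < c3 \<and> c3 < 1 \<and> 0 < c4 \<longrightarrow>
      (\<exists>c C. 0 < c \<and> 0 < C \<and>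
        (\<forall>(n::nat) (th::nat \<Rightarrow> real) Pm V d.
          0 < n \<and> (\<forall>i<n. 0 < th i) \<and> membership_mat n K Pm \<and>
          prob_mat n (H_dcmm n th Pm P) \<and> eigdecomp n K (H_dcmm n th Pm P) V d \<and>
          (\<forall>k<K. real (card (pure_nodes n Pm k)) \<ge> c2 * real n) \<and>
          (theta_max n th) \<le> c4 * (theta_min n th) \<and> (theta_min n th)\<^sup>2 \<ge> real n powr (- c3)
          \<longrightarrow> alpha_sq (H_dcmm n th Pm P) \<le> real n * (theta_max n th)\<^sup>2 \<and>
              (\<forall>k<K. c * (real n * (theta_max n th)\<^sup>2) \<le> \<bar>d k\<bar> \<and> \<bar>d k\<bar> \<le> C * (real n * (theta_max n th)\<^sup>2)))))"
  proof (intro allI impI)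
    fix P assume h: "conn_mat K P \<and> 0 < c2 \<and> c2 < 1 \<and> 0 < c3 \<and> c3 < 1 \<and> 0 < c4"
    have Pc: "P \<in> carrier_mat K K" and dP: "det P \<noteq> 0" using h unfolding conn_mat_def by auto
    obtain s where sp: "s > 0" and sP: "\<forall>u\<in>carrier_vec K. s * (u \<bullet> u) \<le> (P *\<^sub>v u) \<bullet> (P *\<^sub>v u)"
      using P_lower[OF Pc dP] by blast
    have cpos: "0 < c2 * sqrt s / c4^2" using h sp by simp
    show "\<exists>c C. 0 < c \<and> 0 < C \<and>
        (\<forall>(n::nat) (th::nat \<Rightarrow> real) Pm V d.
          0 < n \<and> (\<forall>i<n. 0 < th i) \<and> membership_mat n K Pm \<and>
          prob_mat n (H_dcmm n th Pm P) \<and> eigdecomp n K (H_dcmm n th Pm P) V d \<and>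
          (\<forall>k<K. real (card (pure_nodes n Pm k)) \<ge> c2 * real n) \<and>
          (theta_max n th) \<le> c4 * (theta_min n th) \<and> (theta_min n th)\<^sup>2 \<ge> real n powr (- c3)
          \<longrightarrow> alpha_sq (H_dcmm n th Pm P) \<le> real n * (theta_max n th)\<^sup>2 \<and>
              (\<forall>k<K. c * (real n * (theta_max n th)\<^sup>2) \<le> \<bar>d k\<bar> \<and> \<bar>d k\<bar> \<le> C * (real n * (theta_max n th)\<^sup>2)))"
      apply (rule exI[of _ "c2 * sqrt s / c4^2"], rule exI[of _ 1])
      apply (intro conjI)
        apply (rule cpos)
       apply simp
      apply (intro allI impI)
      subgoal for n th Pm V d
        using part2_inner[OF assms, of c2 c4 s P n th Pm V d] h sp sP by auto
      done
  qed
  show ?thesis using p1 p2 by blast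
qed

end
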